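(* Let $\mathcal D\subseteq M(\mathbb C)^g$ be a bounded non-commutative domain containing $0$, let $f:\mathcal D\to\mathcal D$ be an analytic free map, and let $\phi=f[1]:\mathcal D(1)\to\mathcal D(1)$ with $\phi(0)=0$. For a positive integer $n$ let $\Phi=f[n]:\mathcal D(n)\to\mathcal D(n)$. Then the derivative $\Phi'(0):M_n(\mathbb C)^g\to M_n(\mathbb C)^g$ is unitarily equivalent to $I_n\otimes\phi'(0)$ (identifying $M_n(\mathbb C)^g$ with $M_n(\mathbb C)\otimes\mathbb C^g$).
   Context: $M_n(\mathbb C)^g$ denotes $g$-tuples $X=(X_1,\dots,X_g)$ of $n\times n$ complex matrices, identified with $M_n(\mathbb C)\otimes\mathbb C^g$; products, unitary conjugation and direct sums of tuples are entrywise. A non-commutative set $\mathcal D\subseteq M(\mathbb C)^g$ is a sequence $(\mathcal D(n))_n$, $\mathcal D(n)\subseteq M_n(\mathbb C)^g$, closed under simultaneous unitary similarity and under direct sums; a non-commutative domain if each $\mathcal D(n)$ is open and connected; containing $0$ if $0\in\mathcal D(n)$ for all $n$; bounded if there is $C\in\mathbb R$ with $C^2I-\sum_jX_jX_j^*\succ0$ for all $n$ and $X\in\mathcal D(n)$. A free map is a sequence of functions $f[n]:\mathcal D(n)\to\mathcal D(n)$ such that whenever $X\in\mathcal D(n)$, $Y\in\mathcal D(m)$, $\Gamma\in\mathbb C^{n\times m}$ with $X\Gamma=\Gamma Y$, then $f[n](X)\Gamma=\Gamma f[m](Y)$; it is analytic if each $f[n]$ is holomorphic. *)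

theory Defs
  imports Complex_Main "Jordan_Normal_Form.Matrix"
begin

text \<open>A point of M_n(C)^g is a list of g complex n x n matrices (JNF matrices).\<close>

definition level :: "nat \<Rightarrow> nat \<Rightarrow> complex mat list set" where
  "level g n = {X. length X = g \<and> (\<forall>j<g. X ! j \<in> carrier_mat n n)}"

definition adj :: "complex mat \<Rightarrow> complex mat" where
  "adj A = mat (dim_col A) (dim_row A) (\<lambda>(i,j). cnj (A $$ (j,i)))"

definition unitary_mat :: "nat \<Rightarrow> complex mat \<Rightarrow> bool" where
  "unitary_mat n U \<longleftrightarrow> U \<in> carrier_mat n n \<and> U * adj U = 1\<^sub>m n"

definition tzero :: "nat \<Rightarrow> nat \<Rightarrow> complex mat list" where
  "tzero g n = replicate g (0\<^sub>m n n)"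

definition tadd :: "complex mat list \<Rightarrow> complex mat list \<Rightarrow> complex mat list" where
  "tadd X Y = map2 (+) X Y"

definition tsub :: "complex mat list \<Rightarrow> complex mat list \<Rightarrow> complex mat list" where
  "tsub X Y = map2 (-) X Y"

definition tscale :: "complex \<Rightarrow> complex mat list \<Rightarrow> complex mat list" where
  "tscale c X = map (\<lambda>A. c \<cdot>\<^sub>m A) X"

definition tinner :: "complex mat list \<Rightarrow> complex mat list \<Rightarrow> complex" where
  "tinner X Y = (\<Sum>j<length X. \<Sum>i<dim_row (X ! j). \<Sum>k<dim_col (X ! j).
      (X ! j) $$ (i,k) * cnj ((Y ! j) $$ (i,k)))"

definition tnorm :: "complex mat list \<Rightarrow> real" where
  "tnorm X = sqrt (\<Sum>j<length X. \<Sum>i<dim_row (X ! j). \<Sum>k<dim_col (X ! j).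
      (cmod ((X ! j) $$ (i,k)))\<^sup>2)"

definition topen :: "nat \<Rightarrow> nat \<Rightarrow> complex mat list set \<Rightarrow> bool" where
  "topen g n S \<longleftrightarrow> S \<subseteq> level g n \<and>
     (\<forall>X\<in>S. \<exists>e>0. \<forall>Y\<in>level g n. tnorm (tsub Y X) < e \<longrightarrow> Y \<in> S)"

definition tconnected :: "nat \<Rightarrow> nat \<Rightarrow> complex mat list set \<Rightarrow> bool" where
  "tconnected g n S \<longleftrightarrow> \<not> (\<exists>U V. topen g n U \<and> topen g n V \<and> S \<subseteq> U \<union> V \<and>
      S \<inter> U \<noteq> {} \<and> S \<inter> V \<noteq> {} \<and> S \<inter> U \<inter> V = {})"

definition tlinear :: "nat \<Rightarrow> nat \<Rightarrow> (complex mat list \<Rightarrow> complex mat list) \<Rightarrow> bool" where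
  "tlinear g n L \<longleftrightarrow> (\<forall>X\<in>level g n. L X \<in> level g n) \<and>
     (\<forall>X\<in>level g n. \<forall>Y\<in>level g n. L (tadd X Y) = tadd (L X) (L Y)) \<and>
     (\<forall>c. \<forall>X\<in>level g n. L (tscale c X) = tscale c (L X))"

definition has_tderiv :: "nat \<Rightarrow> nat \<Rightarrow> complex mat list set \<Rightarrow>
    (complex mat list \<Rightarrow> complex mat list) \<Rightarrow> (complex mat list \<Rightarrow> complex mat list) \<Rightarrow>
    complex mat list \<Rightarrow> bool" where
  "has_tderiv g n S F L X0 \<longleftrightarrow> tlinear g n L \<and>
     (\<forall>e>0. \<exists>d>0. \<forall>H\<in>level g n. tadd X0 H \<in> S \<longrightarrow> tnorm H < d \<longrightarrow>
        tnorm (tsub (tsub (F (tadd X0 H)) (F X0)) (L H)) \<le> e * tnorm H)"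

definition tholomorphic :: "nat \<Rightarrow> nat \<Rightarrow> (complex mat list \<Rightarrow> complex mat list) \<Rightarrow>
    complex mat list set \<Rightarrow> bool" where
  "tholomorphic g n F S \<longleftrightarrow> (\<forall>X\<in>S. \<exists>L. has_tderiv g n S F L X)"

definition tconj :: "complex mat \<Rightarrow> complex mat list \<Rightarrow> complex mat list" where
  "tconj U X = map (\<lambda>A. U * A * adj U) X"

definition tdsum :: "complex mat list \<Rightarrow> complex mat list \<Rightarrow> complex mat list" where
  "tdsum X Y = map2 (\<lambda>A B. four_block_mat A (0\<^sub>m (dim_row A) (dim_col B))
                               (0\<^sub>m (dim_row B) (dim_col A)) B) X Y"

definition nc_set :: "nat \<Rightarrow> (nat \<Rightarrow> complex mat list set) \<Rightarrow> bool" where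
  "nc_set g D \<longleftrightarrow> (\<forall>n\<ge>1. D n \<subseteq> level g n) \<and>
     (\<forall>n\<ge>1. \<forall>X\<in>D n. \<forall>U. unitary_mat n U \<longrightarrow> tconj U X \<in> D n) \<and>
     (\<forall>n\<ge>1. \<forall>m\<ge>1. \<forall>X\<in>D n. \<forall>Y\<in>D m. tdsum X Y \<in> D (n + m))"

definition nc_domain :: "nat \<Rightarrow> (nat \<Rightarrow> complex mat list set) \<Rightarrow> bool" where
  "nc_domain g D \<longleftrightarrow> nc_set g D \<and> (\<forall>n\<ge>1. topen g n (D n) \<and> tconnected g n (D n))"

definition contains_zero :: "nat \<Rightarrow> (nat \<Rightarrow> complex mat list set) \<Rightarrow> bool" where
  "contains_zero g D \<longleftrightarrow> (\<forall>n\<ge>1. tzero g n \<in> D n)"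

definition posdef :: "nat \<Rightarrow> complex mat \<Rightarrow> bool" where
  "posdef n A \<longleftrightarrow> A \<in> carrier_mat n n \<and> adj A = A \<and>
     (\<forall>v\<in>carrier_vec n. v \<noteq> 0\<^sub>v n \<longrightarrow> 0 < Re (scalar_prod (map_vec cnj v) (A *\<^sub>v v)))"

definition tsumsq :: "nat \<Rightarrow> complex mat list \<Rightarrow> complex mat" where
  "tsumsq n X = foldr (\<lambda>A B. A * adj A + B) X (0\<^sub>m n n)"

definition nc_bounded :: "nat \<Rightarrow> (nat \<Rightarrow> complex mat list set) \<Rightarrow> bool" where
  "nc_bounded g D \<longleftrightarrow> (\<exists>C::real. \<forall>n\<ge>1. \<forall>X\<in>D n.
      posdef n (complex_of_real (C\<^sup>2) \<cdot>\<^sub>m 1\<^sub>m n - tsumsq n X))"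

definition free_map :: "nat \<Rightarrow> (nat \<Rightarrow> complex mat list set) \<Rightarrow>
    (nat \<Rightarrow> complex mat list \<Rightarrow> complex mat list) \<Rightarrow> bool" where
  "free_map g D f \<longleftrightarrow> (\<forall>n\<ge>1. \<forall>X\<in>D n. f n X \<in> D n) \<and>
     (\<forall>n m X Y \<Gamma>. n \<ge> 1 \<longrightarrow> m \<ge> 1 \<longrightarrow> X \<in> D n \<longrightarrow> Y \<in> D m \<longrightarrow> \<Gamma> \<in> carrier_mat n m \<longrightarrow>
        (\<forall>j<g. X ! j * \<Gamma> = \<Gamma> * Y ! j) \<longrightarrow> (\<forall>j<g. f n X ! j * \<Gamma> = \<Gamma> * f m Y ! j))"

definition analytic_free_map :: "nat \<Rightarrow> (nat \<Rightarrow> complex mat list set) \<Rightarrow>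
    (nat \<Rightarrow> complex mat list \<Rightarrow> complex mat list) \<Rightarrow> bool" where
  "analytic_free_map g D f \<longleftrightarrow> free_map g D f \<and> (\<forall>n\<ge>1. tholomorphic g n (f n) (D n))"

definition unitary_op :: "nat \<Rightarrow> nat \<Rightarrow> (complex mat list \<Rightarrow> complex mat list) \<Rightarrow> bool" where
  "unitary_op g n W \<longleftrightarrow> tlinear g n W \<and> W ` level g n = level g n \<and>
     (\<forall>X\<in>level g n. \<forall>Y\<in>level g n. tinner (W X) (W Y) = tinner X Y)"

text \<open>I_n (x) T for a linear map T on M_1(C)^g = C^g: with a_jk the j-th coordinate of
  T(e_k), (I_n (x) T)(X_1,...,X_g) = (sum_k a_jk X_k)_j.\<close>
definition unit_tup :: "nat \<Rightarrow> nat \<Rightarrow> complex mat list" where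
  "unit_tup g k = map (\<lambda>j. if j = k then 1\<^sub>m 1 else 0\<^sub>m 1 1) [0..<g]"

definition tampl :: "nat \<Rightarrow> nat \<Rightarrow> (complex mat list \<Rightarrow> complex mat list) \<Rightarrow>
    complex mat list \<Rightarrow> complex mat list" where
  "tampl g n T X = map (\<lambda>j. foldr (\<lambda>k B. ((T (unit_tup g k) ! j) $$ (0,0)) \<cdot>\<^sub>m (X ! k) + B)
                                  [0..<g] (0\<^sub>m n n)) [0..<g]"

end

theory Submission
  imports Defs
begin

lemma mult_col:
  assumes "A \<in> carrier_mat n n" "u \<in> carrier_mat n 1" "i < n"
  shows "(A * u) $$ (i,0) = (\<Sum>c<n. A $$ (i,c) * u $$ (c,0))"
  using assms by (auto simp: scalar_prod_def row_def col_def lessThan_atLeast0 intro!: sum.cong)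
lemma mult_11:
  assumes "u \<in> carrier_mat n 1" "M \<in> carrier_mat 1 1" "i < n"
  shows "(u * M) $$ (i,0) = u $$ (i,0) * M $$ (0,0)"
  using assms by (auto simp: scalar_prod_def row_def col_def)


lemma level_nth: "X \<in> level g n \<Longrightarrow> j < g \<Longrightarrow> X ! j \<in> carrier_mat n n"
  by (simp add: level_def)
lemma level_len: "X \<in> level g n \<Longrightarrow> length X = g"
  by (simp add: level_def)

lemma tadd_nth: "j < length X \<Longrightarrow> j < length Y \<Longrightarrow> tadd X Y ! j = X ! j + Y ! j"
  by (simp add: tadd_def)
lemma tsub_nth: "j < length X \<Longrightarrow> j < length Y \<Longrightarrow> tsub X Y ! j = X ! j - Y ! j"
  by (simp add: tsub_def)
lemma tscale_nth: "j < length X \<Longrightarrow> tscale c X ! j = c \<cdot>\<^sub>m X ! j"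
  by (simp add: tscale_def)

lemma tadd_level: "X \<in> level g n \<Longrightarrow> Y \<in> level g n \<Longrightarrow> tadd X Y \<in> level g n"
  by (auto simp: level_def tadd_def)
lemma tsub_level: "X \<in> level g n \<Longrightarrow> Y \<in> level g n \<Longrightarrow> tsub X Y \<in> level g n"
  by (auto simp: level_def tsub_def intro!: minus_carrier_mat)
lemma tscale_level: "X \<in> level g n \<Longrightarrow> tscale c X \<in> level g n"
  by (auto simp: level_def tscale_def)
lemma tzero_level: "tzero g n \<in> level g n"
  by (auto simp: level_def tzero_def)

lemma tadd_zero: "H \<in> level g n \<Longrightarrow> tadd (tzero g n) H = H"
  by (rule nth_equalityI) (auto simp: level_def tadd_def tzero_def)
lemma tsub_zero: "H \<in> level g n \<Longrightarrow> tsub H (tzero g n) = H"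
  by (rule nth_equalityI) (auto simp: level_def tsub_def tzero_def intro!: eq_matI)

lemma entry_le_tnorm:
  assumes "X \<in> level g n" "j < g" "i < n" "c < n"
  shows "cmod (X ! j $$ (i,c)) \<le> tnorm X"
proof -
  have d: "dim_row (X ! j) = n" "dim_col (X ! j) = n" "length X = g"
    using assms by (auto simp: level_def)
  let ?s = "\<lambda>j. \<Sum>i<dim_row (X ! j). \<Sum>k<dim_col (X ! j). (cmod ((X ! j) $$ (i,k)))\<^sup>2"
  have "(cmod (X ! j $$ (i,c)))\<^sup>2 \<le> (\<Sum>k<n. (cmod ((X ! j) $$ (i,k)))\<^sup>2)"
    by (rule member_le_sum[where f="\<lambda>k. (cmod ((X ! j) $$ (i,k)))\<^sup>2"]) (use assms in auto)
  also have "\<dots> \<le> (\<Sum>i<n. \<Sum>k<n. (cmod ((X ! j) $$ (i,k)))\<^sup>2)"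
    by (rule member_le_sum[where f="\<lambda>i. \<Sum>k<n. (cmod ((X ! j) $$ (i,k)))\<^sup>2"])
       (use assms in \<open>auto intro: sum_nonneg\<close>)
  also have "\<dots> = ?s j" using d by simp
  also have "\<dots> \<le> (\<Sum>j<length X. ?s j)"
    by (rule member_le_sum) (use assms d in \<open>auto intro!: sum_nonneg\<close>)
  finally have "(cmod (X ! j $$ (i,c)))\<^sup>2 \<le> (\<Sum>j<length X. ?s j)" .
  hence "sqrt ((cmod (X ! j $$ (i,c)))\<^sup>2) \<le> tnorm X"
    unfolding tnorm_def by (rule real_sqrt_le_mono)
  thus ?thesis by simp
qed

lemma tnorm_tscale:
  assumes "X \<in> level g n"
  shows "tnorm (tscale c X) = cmod c * tnorm X"
proof -
  have "tnorm (tscale c X) = sqrt ((cmod c)\<^sup>2 * (\<Sum>j<length X. \<Sum>i<dim_row (X ! j). \<Sum>k<dim_col (X ! j).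
      (cmod ((X ! j) $$ (i,k)))\<^sup>2))"
    unfolding tnorm_def tscale_def
    by (simp add: sum_distrib_left norm_mult power_mult_distrib)
  also have "\<dots> = cmod c * tnorm X" by (simp add: tnorm_def real_sqrt_mult)
  finally show ?thesis .
qed



lemma q_zero:
  fixes q :: complex and K :: real
  assumes "K \<ge> 0" "\<And>e. e > 0 \<Longrightarrow> cmod q \<le> e * K"
  shows "q = 0"
proof (rule ccontr)
  assume "q \<noteq> 0"
  hence p: "cmod q > 0" by simp
  define e where "e = cmod q / (2 * (K + 1))"
  have "e > 0" using p assms(1) by (simp add: e_def)
  hence "cmod q \<le> e * K" by (rule assms(2))
  also have "e * K < cmod q"
  proof -
    have "e * K = cmod q * (K / (2*(K+1)))" by (simp add: e_def)
    also have "K / (2*(K+1)) < 1" using assms(1) by (simp add: field_simps)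
    hence "cmod q * (K / (2*(K+1))) < cmod q * 1" using p by (intro mult_strict_left_mono) auto
    finally show ?thesis by simp
  qed
  finally show False by simp
qed

lemma rel_b:
  assumes fm: "free_map g D f"
    and Dn: "D n \<subseteq> level g n" and D1: "D 1 \<subseteq> level g 1"
    and on: "topen g n (D n)" and o1: "topen g 1 (D 1)"
    and zn: "tzero g n \<in> D n" and z1: "tzero g 1 \<in> D 1"
    and n1: "n \<ge> 1"
    and dn: "has_tderiv g n (D n) (f n) L (tzero g n)"
    and d1: "has_tderiv g 1 (D 1) (f 1) L1 (tzero g 1)"
    and H: "H \<in> level g n" and h: "h \<in> level g 1" and u: "u \<in> carrier_mat n 1"
    and ev: "\<forall>j<g. H ! j * u = u * h ! j"
    and j: "j < g"
  shows "L H ! j * u = u * L1 h ! j"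
proof -
  have linn: "tlinear g n L" and lin1: "tlinear g 1 L1"
    using dn d1 by (auto simp: has_tderiv_def)
  have LH: "L H \<in> level g n" using linn H by (auto simp: tlinear_def)
  have Lh: "L1 h \<in> level g 1" using lin1 h by (auto simp: tlinear_def)
  have LHj: "L H ! j \<in> carrier_mat n n" using LH j by (rule level_nth)
  have Lhj: "L1 h ! j \<in> carrier_mat 1 1" using Lh j by (rule level_nth)
  have Hj: "H ! j \<in> carrier_mat n n" using H j by (rule level_nth)
  have hj: "h ! j \<in> carrier_mat 1 1" using h j by (rule level_nth)
  show ?thesis
  proof (rule eq_matI)
    show "dim_row (L H ! j * u) = dim_row (u * L1 h ! j)" "dim_col (L H ! j * u) = dim_col (u * L1 h ! j)"
      using LHj Lhj u by auto
    fix i c assume "i < dim_row (u * L1 h ! j)" "c < dim_col (u * L1 h ! j)"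
    hence i: "i < n" and c0: "c = 0" using u Lhj by auto
    define q where "q = (\<Sum>c<n. L H ! j $$ (i,c) * u $$ (c,0)) - u $$ (i,0) * L1 h ! j $$ (0,0)"
    define S where "S = (\<Sum>c<n. cmod (u $$ (c,0)))"
    define K where "K = S * tnorm H + cmod (u $$ (i,0)) * tnorm h"
    have tnH: "tnorm H \<ge> 0" "tnorm h \<ge> 0" by (auto simp: tnorm_def intro!: sum_nonneg)
    have S0: "S \<ge> 0" by (auto simp: S_def intro!: sum_nonneg)
    have K0: "K \<ge> 0" using tnH S0 by (auto simp: K_def)
    have "q = 0"
    proof (rule q_zero[OF K0])
      fix e :: real assume e: "e > 0"
      obtain dN where dN: "dN > 0" and dNp: "\<forall>H'\<in>level g n. tadd (tzero g n) H' \<in> D n \<longrightarrow> tnorm H' < dN \<longrightarrow>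
          tnorm (tsub (tsub (f n (tadd (tzero g n) H')) (f n (tzero g n))) (L H')) \<le> e * tnorm H'"
        using dn e unfolding has_tderiv_def by blast
      obtain d1' where d1': "d1' > 0" and d1p: "\<forall>H'\<in>level g 1. tadd (tzero g 1) H' \<in> D 1 \<longrightarrow> tnorm H' < d1' \<longrightarrow>
          tnorm (tsub (tsub (f 1 (tadd (tzero g 1) H')) (f 1 (tzero g 1))) (L1 H')) \<le> e * tnorm H'"
        using d1 e unfolding has_tderiv_def by blast
      obtain rN where rN: "rN > 0" and rNp: "\<forall>Y\<in>level g n. tnorm (tsub Y (tzero g n)) < rN \<longrightarrow> Y \<in> D n"
        using on zn unfolding topen_def by blast
      obtain r1 where r1: "r1 > 0" and r1p: "\<forall>Y\<in>level g 1. tnorm (tsub Y (tzero g 1)) < r1 \<longrightarrow> Y \<in> D 1"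
        using o1 z1 unfolding topen_def by blast
      define \<delta> where "\<delta> = min (min dN rN) (min d1' r1)"
      have \<delta>: "\<delta> > 0" using dN rN d1' r1 by (simp add: \<delta>_def)
      define t where "t = \<delta> / (tnorm H + tnorm h + 1)"
      have t: "t > 0" using \<delta> tnH by (simp add: t_def)
      have tH1: "t * tnorm H < \<delta>" and th1: "t * tnorm h < \<delta>"
        using \<delta> tnH by (auto simp: t_def field_simps add_pos_nonneg)
      define tH where "tH = tscale (of_real t) H"
      define th where "th = tscale (of_real t) h"
      have tHl: "tH \<in> level g n" and thl: "th \<in> level g 1" using H h by (auto simp: tH_def th_def intro: tscale_level)
      have ntH: "tnorm tH = t * tnorm H" using H t by (simp add: tH_def tnorm_tscale)
      have nth: "tnorm th = t * tnorm h" using h t by (simp add: th_def tnorm_tscale)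
      have tHD: "tH \<in> D n" using rNp tHl ntH tH1 by (auto simp: tsub_zero \<delta>_def)
      have thD: "th \<in> D 1" using r1p thl nth th1 by (auto simp: tsub_zero \<delta>_def)
      have Rn: "tnorm (tsub (tsub (f n tH) (f n (tzero g n))) (L tH)) \<le> e * tnorm tH"
        using dNp tHl tHD ntH tH1 by (auto simp: tadd_zero \<delta>_def)
      have R1: "tnorm (tsub (tsub (f 1 th) (f 1 (tzero g 1))) (L1 th)) \<le> e * tnorm th"
        using d1p thl thD nth th1 by (auto simp: tadd_zero \<delta>_def)
      have evt: "\<forall>j<g. tH ! j * u = u * th ! j"
      proof (intro allI impI)
        fix j' assume j': "j' < g"
        have "tH ! j' * u = of_real t \<cdot>\<^sub>m (H ! j' * u)"
          using H j' u by (simp add: tH_def tscale_nth level_len mult_smult_assoc_mat[OF level_nth[OF H j'] u])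
        also have "\<dots> = u * th ! j'"
          using h j' u ev by (simp add: th_def tscale_nth level_len mult_smult_distrib[OF u level_nth[OF h j']])
        finally show "tH ! j' * u = u * th ! j'" .
      qed
      have ev0: "\<forall>j<g. tzero g n ! j * u = u * tzero g 1 ! j"
        using u by (auto simp: tzero_def)
      have fmr: "\<forall>n m X Y \<Gamma>. n \<ge> 1 \<longrightarrow> m \<ge> 1 \<longrightarrow> X \<in> D n \<longrightarrow> Y \<in> D m \<longrightarrow> \<Gamma> \<in> carrier_mat n m \<longrightarrow>
        (\<forall>j<g. X ! j * \<Gamma> = \<Gamma> * Y ! j) \<longrightarrow> (\<forall>j<g. f n X ! j * \<Gamma> = \<Gamma> * f m Y ! j)"
        and fD: "\<forall>n\<ge>1. \<forall>X\<in>D n. f n X \<in> D n" using fm by (auto simp: free_map_def)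
      have I1: "f n tH ! j * u = u * f 1 th ! j" using fmr n1 tHD thD u evt j by blast
      have I0: "f n (tzero g n) ! j * u = u * f 1 (tzero g 1) ! j" using fmr n1 zn z1 u ev0 j by blast
      have fl: "f n tH \<in> level g n" "f n (tzero g n) \<in> level g n" "f 1 th \<in> level g 1" "f 1 (tzero g 1) \<in> level g 1"
        using fD n1 tHD thD zn z1 Dn D1 by auto
      have LtH: "L tH = tscale (of_real t) (L H)" using linn H by (auto simp: tlinear_def tH_def)
      have Lth: "L1 th = tscale (of_real t) (L1 h)" using lin1 h by (auto simp: tlinear_def th_def)
      define Rn' where "Rn' = tsub (tsub (f n tH) (f n (tzero g n))) (L tH)"
      define R1' where "R1' = tsub (tsub (f 1 th) (f 1 (tzero g 1))) (L1 th)"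
      have Rnl: "Rn' \<in> level g n" unfolding Rn'_def
        using fl LH by (auto intro!: tsub_level simp: LtH tscale_level)
      have R1l: "R1' \<in> level g 1" unfolding R1'_def
        using fl Lh by (auto intro!: tsub_level simp: Lth tscale_level)
      have Rne: "Rn' ! j $$ (i,c') = f n tH ! j $$ (i,c') - f n (tzero g n) ! j $$ (i,c') - of_real t * L H ! j $$ (i,c')"
        if c': "c' < n" for c'
      proof -
        have l: "length (f n tH) = g" "length (f n (tzero g n)) = g" "length (L H) = g"
          using fl LH by (auto simp: level_len)
        have c1: "f n tH ! j \<in> carrier_mat n n" "f n (tzero g n) ! j \<in> carrier_mat n n" "L H ! j \<in> carrier_mat n n"
          using fl LH j by (auto intro: level_nth)
        have "Rn' ! j = (f n tH ! j - f n (tzero g n) ! j) - of_real t \<cdot>\<^sub>m L H ! j"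
          using l j by (simp add: Rn'_def LtH tsub_nth tscale_nth tsub_def tscale_def)
        thus ?thesis using c1 i c' by simp
      qed
      have R1e: "R1' ! j $$ (0,0) = f 1 th ! j $$ (0,0) - f 1 (tzero g 1) ! j $$ (0,0) - of_real t * L1 h ! j $$ (0,0)"
      proof -
        have l: "length (f 1 th) = g" "length (f 1 (tzero g 1)) = g" "length (L1 h) = g"
          using fl Lh by (auto simp: level_len)
        have c1: "f 1 th ! j \<in> carrier_mat 1 1" "f 1 (tzero g 1) ! j \<in> carrier_mat 1 1" "L1 h ! j \<in> carrier_mat 1 1"
          using fl Lh j by (auto intro: level_nth)
        have "R1' ! j = (f 1 th ! j - f 1 (tzero g 1) ! j) - of_real t \<cdot>\<^sub>m L1 h ! j"
          using l j by (simp add: R1'_def Lth tsub_nth tscale_nth tsub_def tscale_def)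
        thus ?thesis using c1 by simp
      qed
      have e1: "(\<Sum>c<n. f n tH ! j $$ (i,c) * u $$ (c,0)) = u $$ (i,0) * f 1 th ! j $$ (0,0)"
        using arg_cong[OF I1, of "\<lambda>M. M $$ (i,0)"] mult_col[OF level_nth[OF fl(1) j] u i] mult_11[OF u level_nth[OF fl(3) j] i]
        by simp
      have e0: "(\<Sum>c<n. f n (tzero g n) ! j $$ (i,c) * u $$ (c,0)) = u $$ (i,0) * f 1 (tzero g 1) ! j $$ (0,0)"
        using arg_cong[OF I0, of "\<lambda>M. M $$ (i,0)"] mult_col[OF level_nth[OF fl(2) j] u i] mult_11[OF u level_nth[OF fl(4) j] i]
        by simp
      have sR: "(\<Sum>c<n. Rn' ! j $$ (i,c) * u $$ (c,0)) = (\<Sum>c<n. f n tH ! j $$ (i,c) * u $$ (c,0))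
          - (\<Sum>c<n. f n (tzero g n) ! j $$ (i,c) * u $$ (c,0)) - of_real t * (\<Sum>c<n. L H ! j $$ (i,c) * u $$ (c,0))"
        by (simp add: Rne sum_subtractf sum_distrib_left algebra_simps sum.distrib)
      have tq: "of_real t * q = u $$ (i,0) * R1' ! j $$ (0,0) - (\<Sum>c<n. Rn' ! j $$ (i,c) * u $$ (c,0))"
        unfolding sR R1e e1 e0 q_def by (simp add: algebra_simps)
      have b1: "cmod (\<Sum>c<n. Rn' ! j $$ (i,c) * u $$ (c,0)) \<le> tnorm Rn' * S"
      proof -
        have "cmod (\<Sum>c<n. Rn' ! j $$ (i,c) * u $$ (c,0)) \<le> (\<Sum>c<n. cmod (Rn' ! j $$ (i,c)) * cmod (u $$ (c,0)))"
          by (rule order_trans[OF norm_sum]) (simp add: norm_mult)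
        also have "\<dots> \<le> (\<Sum>c<n. tnorm Rn' * cmod (u $$ (c,0)))"
          by (intro sum_mono mult_right_mono entry_le_tnorm[OF Rnl j i]) auto
        finally show ?thesis by (simp add: S_def sum_distrib_left)
      qed
      have b2: "cmod (u $$ (i,0) * R1' ! j $$ (0,0)) \<le> cmod (u $$ (i,0)) * tnorm R1'"
        using entry_le_tnorm[OF R1l j, of 0 0] by (simp add: norm_mult mult_left_mono)
      have "t * cmod q = cmod (of_real t * q)" using t by (simp add: norm_mult)
      also have "\<dots> \<le> cmod (u $$ (i,0) * R1' ! j $$ (0,0)) + cmod (\<Sum>c<n. Rn' ! j $$ (i,c) * u $$ (c,0))"
        unfolding tq by (rule norm_triangle_ineq4)
      also have "\<dots> \<le> cmod (u $$ (i,0)) * tnorm R1' + tnorm Rn' * S" using b1 b2 by simp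
      also have "\<dots> \<le> cmod (u $$ (i,0)) * (e * (t * tnorm h)) + (e * (t * tnorm H)) * S"
        using Rn R1 ntH nth S0 unfolding Rn'_def R1'_def
        by (intro add_mono mult_left_mono mult_right_mono) auto
      also have "\<dots> = t * (e * K)" by (simp add: K_def algebra_simps)
      finally show "cmod q \<le> e * K" using t by simp
    qed
    thus "(L H ! j * u) $$ (i, c) = (u * L1 h ! j) $$ (i, c)"
      unfolding c0 using mult_col[OF LHj u i] mult_11[OF u Lhj i] \<open>q = 0\<close> unfolding q_def by simp
  qed
qed



definition Etup :: "nat \<Rightarrow> nat \<Rightarrow> nat \<Rightarrow> nat \<Rightarrow> nat \<Rightarrow> complex mat list" where
  "Etup g n k a b = map (\<lambda>j. mat n n (\<lambda>(i,c). if j = k \<and> i = a \<and> c = b then 1 else 0)) [0..<g]"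

definition colv :: "nat \<Rightarrow> (nat \<Rightarrow> complex) \<Rightarrow> complex mat" where
  "colv n v = mat n 1 (\<lambda>(i,_). v i)"

lemma Etup_level: "Etup g n k a b \<in> level g n"
  by (auto simp: Etup_def level_def)

lemma Etup_entry: "j < g \<Longrightarrow> i < n \<Longrightarrow> c < n \<Longrightarrow>
   Etup g n k a b ! j $$ (i,c) = (if j = k \<and> i = a \<and> c = b then 1 else 0)"
  by (simp add: Etup_def)

lemma sum_delta_col[simp]:
  fixes Z :: "nat \<Rightarrow> complex"
  shows "c' < n \<Longrightarrow> (\<Sum>c<n. Z c * (if c = c' then 1 else 0)) = Z c'"
proof -
  assume "c' < n"
  have "(\<Sum>c<n. Z c * (if c = c' then 1 else 0)) = (\<Sum>c<n. if c = c' then Z c else 0)"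
    by (rule sum.cong) auto
  thus ?thesis using \<open>c' < n\<close> by simp
qed

lemma colrel:
  assumes rb: "\<forall>H h u j. H \<in> level g n \<longrightarrow> h \<in> level g 1 \<longrightarrow> u \<in> carrier_mat n 1 \<longrightarrow>
        (\<forall>j<g. H ! j * u = u * h ! j) \<longrightarrow> j < g \<longrightarrow> L H ! j * u = u * L1 h ! j"
    and lin: "tlinear g n L" "tlinear g 1 L1"
    and H: "H \<in> level g n" and h: "h \<in> level g 1"
    and ev: "\<And>j i. j < g \<Longrightarrow> i < n \<Longrightarrow> (\<Sum>c<n. H ! j $$ (i,c) * v c) = v i * h ! j $$ (0,0)"
    and j: "j < g" and i: "i < n"
  shows "(\<Sum>c<n. L H ! j $$ (i,c) * v c) = v i * L1 h ! j $$ (0,0)"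
proof -
  have u: "colv n v \<in> carrier_mat n 1" by (simp add: colv_def)
  have "\<forall>j<g. H ! j * colv n v = colv n v * h ! j"
  proof (intro allI impI)
    fix j assume j: "j < g"
    have Hj: "H ! j \<in> carrier_mat n n" and hj: "h ! j \<in> carrier_mat 1 1" using H h j by (auto intro: level_nth)
    show "H ! j * colv n v = colv n v * h ! j"
    proof (rule eq_matI)
      fix i c assume "i < dim_row (colv n v * h ! j)" "c < dim_col (colv n v * h ! j)"
      hence i: "i < n" and c: "c = 0" using hj by (auto simp: colv_def)
      show "(H ! j * colv n v) $$ (i, c) = (colv n v * h ! j) $$ (i, c)"
        using mult_col[OF Hj u i] mult_11[OF u hj i] ev[OF j i] i unfolding c by (simp add: colv_def)
    qed (use Hj hj in \<open>auto simp: colv_def\<close>)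
  qed
  hence e: "L H ! j * colv n v = colv n v * L1 h ! j" using rb H h u j by blast
  have LHj: "L H ! j \<in> carrier_mat n n" using lin(1) H j by (auto simp: tlinear_def intro: level_nth)
  have Lhj: "L1 h ! j \<in> carrier_mat 1 1" using lin(2) h j by (auto simp: tlinear_def intro: level_nth)
  show ?thesis
    using arg_cong[OF e, of "\<lambda>M. M $$ (i,0)"] mult_col[OF LHj u i] mult_11[OF u Lhj i] i
    by (simp add: colv_def)
qed

lemma tlinear_zero:
  assumes "tlinear g n L" shows "L (tzero g n) = tzero g n"
proof -
  have z: "tzero g n \<in> level g n" by (rule tzero_level)
  have Lz: "L (tzero g n) \<in> level g n" using assms z by (auto simp: tlinear_def)
  have e: "tscale 0 (tzero g n) = tzero g n"
    by (rule nth_equalityI) (auto simp: tscale_def tzero_def)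
  have "L (tscale 0 (tzero g n)) = tscale 0 (L (tzero g n))" using assms z by (simp add: tlinear_def)
  hence "L (tzero g n) = tscale 0 (L (tzero g n))" by (simp only: e)
  also have "\<dots> = tzero g n" using Lz
    by (intro nth_equalityI) (auto simp: tscale_def tzero_def level_def intro!: eq_matI)
  finally show ?thesis .
qed

lemma L_elem:
  assumes rb: "\<forall>H h u j. H \<in> level g n \<longrightarrow> h \<in> level g 1 \<longrightarrow> u \<in> carrier_mat n 1 \<longrightarrow>
        (\<forall>j<g. H ! j * u = u * h ! j) \<longrightarrow> j < g \<longrightarrow> L H ! j * u = u * L1 h ! j"
    and lin: "tlinear g n L" "tlinear g 1 L1"
    and k: "k < g" and a: "a < n" and b: "b < n"
    and j: "j < g" and i: "i < n" and c: "c < n"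
  shows "L (Etup g n k a b) ! j $$ (i,c) = (if i = a \<and> c = b then L1 (unit_tup g k) ! j $$ (0,0) else 0)"
proof -
  have L10: "L1 (tzero g 1) = tzero g 1" using lin(2) by (rule tlinear_zero)
  have ul: "unit_tup g k \<in> level g 1" by (auto simp: unit_tup_def level_def)
  have ue: "j' < g \<Longrightarrow> unit_tup g k ! j' $$ (0,0) = (if j' = k then 1 else 0)" for j'
    by (simp add: unit_tup_def)
  have z1: "j' < g \<Longrightarrow> tzero g 1 ! j' $$ (0,0) = 0" for j' by (simp add: tzero_def)
  have L10': "L1 (tzero g (Suc 0)) = tzero g (Suc 0)" using L10 by simp
  note CR = colrel[OF rb lin]
  have col0: "L (Etup g n k a' b') ! j $$ (i,c') = 0" if "c' \<noteq> b'" "c' < n" for a' b' c'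
  proof -
    have "(\<Sum>c<n. L (Etup g n k a' b') ! j $$ (i,c) * (if c = c' then 1 else 0)) = (if i = c' then 1 else 0) * L1 (tzero g 1) ! j $$ (0,0)"
      by (rule CR[OF Etup_level tzero_level _ j i]) (use that in \<open>auto simp: Etup_entry z1 tzero_def\<close>)
    thus ?thesis unfolding L10 using that j by (simp add: tzero_def)
  qed
  have diag: "L (Etup g n k a a) ! j $$ (i,a) = (if i = a then L1 (unit_tup g k) ! j $$ (0,0) else 0)"
  proof -
    have "(\<Sum>c<n. L (Etup g n k a a) ! j $$ (i,c) * (if c = a then 1 else 0)) = (if i = a then 1 else 0) * L1 (unit_tup g k) ! j $$ (0,0)"
      by (rule CR[OF Etup_level ul _ j i]) (use a in \<open>auto simp: Etup_entry ue\<close>)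
    thus ?thesis using a by simp
  qed
  show ?thesis
  proof (cases "c = b")
    case False thus ?thesis using col0[OF False c] by simp
  next
    case cb: True
    show ?thesis
    proof (cases "a = b")
      case True thus ?thesis using diag cb by simp
    next
      case False
      define M where "M = tadd (Etup g n k a a) (Etup g n k a b)"
      have Ml: "M \<in> level g n" by (simp add: M_def tadd_level Etup_level)
      have Mj: "M ! j' = Etup g n k a a ! j' + Etup g n k a b ! j'" if "j' < g" for j'
        using that by (simp add: M_def tadd_nth Etup_def)
      have Me: "M ! j' $$ (i',c') = (if j' = k \<and> i' = a \<and> c' = a then 1 else 0) + (if j' = k \<and> i' = a \<and> c' = b then 1 else 0)"
        if "j' < g" "i' < n" "c' < n" for j' i' c'
        using that Mj[OF that(1)] by (simp add: Etup_def)
      define v where "v = (\<lambda>c::nat. (if c = b then 1 else 0) - (if c = a then 1 else (0::complex)))"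
      have LM: "L M = tadd (L (Etup g n k a a)) (L (Etup g n k a b))"
        using lin(1) by (simp add: M_def tlinear_def Etup_level)
      have LE: "L (Etup g n k a a) \<in> level g n" "L (Etup g n k a b) \<in> level g n"
        using lin(1) Etup_level by (auto simp: tlinear_def)
      have LMe: "L M ! j $$ (i,c') = L (Etup g n k a a) ! j $$ (i,c') + L (Etup g n k a b) ! j $$ (i,c')"
        if "c' < n" for c'
        using LE j i that level_nth[OF LE(1) j] level_nth[OF LE(2) j] by (simp add: LM tadd_nth level_len)
      have "(\<Sum>c<n. L M ! j $$ (i,c) * v c) = v i * L1 (tzero g 1) ! j $$ (0,0)"
      proof (rule CR[OF Ml tzero_level _ j i])
        fix j' i' assume j': "j' < g" and i': "i' < n"
        have "(\<Sum>c<n. M ! j' $$ (i',c) * v c) = (\<Sum>c<n. M ! j' $$ (i',c) * (if c = b then 1 else 0)) - (\<Sum>c<n. M ! j' $$ (i',c) * (if c = a then 1 else 0))"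
          by (simp add: v_def right_diff_distrib sum_subtractf)
        also have "\<dots> = M ! j' $$ (i',b) - M ! j' $$ (i',a)" using a b by simp
        also have "\<dots> = 0" using Me[OF j' i' a] Me[OF j' i' b] False by simp
        finally show "(\<Sum>c<n. M ! j' $$ (i',c) * v c) = v i' * tzero g 1 ! j' $$ (0,0)" using j' by (simp add: tzero_def)
      qed
      hence "(\<Sum>c<n. L M ! j $$ (i,c) * (if c = b then 1 else 0)) - (\<Sum>c<n. L M ! j $$ (i,c) * (if c = a then 1 else 0)) = 0"
        unfolding L10 using j by (simp add: tzero_def v_def right_diff_distrib sum_subtractf)
      hence "L M ! j $$ (i,b) - L M ! j $$ (i,a) = 0" using a b by simp
      hence "L (Etup g n k a a) ! j $$ (i,b) + L (Etup g n k a b) ! j $$ (i,b) - 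
             (L (Etup g n k a a) ! j $$ (i,a) + L (Etup g n k a b) ! j $$ (i,a)) = 0"
        using LMe[OF a] LMe[OF b] by simp
      moreover have "L (Etup g n k a a) ! j $$ (i,b) = 0" using col0[of b a a] False b by simp
      moreover have "L (Etup g n k a b) ! j $$ (i,a) = 0" using col0[of a b a] False a by simp
      ultimately show ?thesis using diag cb by (auto simp: algebra_simps)
    qed
  qed
qed



definition Xs :: "nat \<Rightarrow> nat \<Rightarrow> complex mat list \<Rightarrow> (nat \<times> nat \<times> nat) set \<Rightarrow> complex mat list" where
  "Xs g n X S = map (\<lambda>j. mat n n (\<lambda>(i,c). if (j,i,c) \<in> S then X ! j $$ (i,c) else 0)) [0..<g]"

lemma Xs_level: "Xs g n X S \<in> level g n" by (auto simp: Xs_def level_def)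

lemma Xs_empty: "Xs g n X {} = tzero g n"
  by (rule nth_equalityI) (auto simp: Xs_def tzero_def intro!: eq_matI)

lemma Xs_full: "X \<in> level g n \<Longrightarrow> Xs g n X ({..<g} \<times> {..<n} \<times> {..<n}) = X"
  by (rule nth_equalityI) (auto simp: Xs_def level_def intro!: eq_matI)

lemma Xs_insert:
  assumes "(k,a,b) \<notin> S" "k < g"
  shows "Xs g n X (insert (k,a,b) S) = tadd (Xs g n X S) (tscale (X ! k $$ (a,b)) (Etup g n k a b))"
  by (rule nth_equalityI) (use assms in \<open>auto simp: Xs_def tadd_def tscale_def Etup_def intro!: eq_matI\<close>)

lemma decomp:
  assumes lin: "tlinear g n L"
    and El: "\<And>k a b j i c. k < g \<Longrightarrow> a < n \<Longrightarrow> b < n \<Longrightarrow> j < g \<Longrightarrow> i < n \<Longrightarrow> c < n \<Longrightarrow>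
       L (Etup g n k a b) ! j $$ (i,c) = (if i = a \<and> c = b then A j k else 0)"
    and fin: "finite S" and sub: "S \<subseteq> {..<g} \<times> {..<n} \<times> {..<n}"
  shows "\<forall>j<g. \<forall>i<n. \<forall>c<n. L (Xs g n X S) ! j $$ (i,c) =
           (\<Sum>k<g. A j k * (if (k,i,c) \<in> S then X ! k $$ (i,c) else 0))"
  using fin sub
proof (induction S rule: finite_subset_induct)
  case empty
  show ?case unfolding Xs_empty tlinear_zero[OF lin] by (simp add: tzero_def)
next
  case (insert t S)
  obtain k a b where t: "t = (k,a,b)" by (cases t) auto
  have k: "k < g" and a: "a < n" and b: "b < n" using insert(2) t by auto
  have nS: "(k,a,b) \<notin> S" using insert(3) t by simp
  define x where "x = X ! k $$ (a,b)"
  have LX: "L (Xs g n X (insert t S)) = tadd (L (Xs g n X S)) (tscale x (L (Etup g n k a b)))"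
    using lin unfolding t Xs_insert[OF nS k] x_def by (simp add: tlinear_def Xs_level Etup_level tscale_level)
  have l1: "L (Xs g n X S) \<in> level g n" and l2: "L (Etup g n k a b) \<in> level g n"
    using lin by (auto simp: tlinear_def Xs_level Etup_level)
  show ?case
  proof (intro allI impI)
    fix j i c assume j: "j < g" and i: "i < n" and c: "c < n"
    have c1: "L (Xs g n X S) ! j \<in> carrier_mat n n" "L (Etup g n k a b) ! j \<in> carrier_mat n n"
      using l1 l2 j by (auto intro: level_nth)
    have "L (Xs g n X (insert t S)) ! j $$ (i,c) = L (Xs g n X S) ! j $$ (i,c) + x * L (Etup g n k a b) ! j $$ (i,c)"
      unfolding LX using l1 l2 j c1 i c by (simp add: tadd_nth tscale_nth level_len tscale_def)
    also have "\<dots> = (\<Sum>k<g. A j k * (if (k,i,c) \<in> S then X ! k $$ (i,c) else 0)) + (if i = a \<and> c = b then A j k * x else 0)"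
      using insert(4) j i c El[OF k a b j i c] by simp
    also have "(if i = a \<and> c = b then A j k * x else 0) = (\<Sum>k'<g. if k' = k then (if i = a \<and> c = b then A j k' * X ! k' $$ (i,c) else 0) else 0)"
      using k by (simp add: x_def)
    also have "(\<Sum>k<g. A j k * (if (k,i,c) \<in> S then X ! k $$ (i,c) else 0)) + \<dots> =
        (\<Sum>k'<g. A j k' * (if (k',i,c) \<in> insert t S then X ! k' $$ (i,c) else 0))"
      unfolding sum.distrib[symmetric] by (rule sum.cong) (use nS in \<open>auto simp: t\<close>)
    finally show "L (Xs g n X (insert t S)) ! j $$ (i,c) = (\<Sum>k'<g. A j k' * (if (k',i,c) \<in> insert t S then X ! k' $$ (i,c) else 0))" .
  qed
qed

lemma foldr_entry:
  assumes "X \<in> level g n" "\<forall>k\<in>set ks. k < g"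
  shows "foldr (\<lambda>k B. cf k \<cdot>\<^sub>m (X ! k) + B) ks (0\<^sub>m n n) \<in> carrier_mat n n \<and>
    (\<forall>i<n. \<forall>c<n. foldr (\<lambda>k B. cf k \<cdot>\<^sub>m (X ! k) + B) ks (0\<^sub>m n n) $$ (i,c) = sum_list (map (\<lambda>k. cf k * X ! k $$ (i,c)) ks))"
  using assms(2)
proof (induction ks)
  case Nil thus ?case by simp
next
  case (Cons k ks)
  have Xk: "X ! k \<in> carrier_mat n n" using assms(1) Cons.prems by (auto intro: level_nth)
  thus ?case using Cons by auto
qed

lemma tampl_entry:
  assumes "X \<in> level g n" "j < g" "i < n" "c < n"
  shows "tampl g n T X ! j $$ (i,c) = (\<Sum>k<g. (T (unit_tup g k) ! j) $$ (0,0) * X ! k $$ (i,c))"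
proof -
  have "\<forall>k\<in>set [0..<g]. k < g" by simp
  from foldr_entry[OF assms(1) this, of "\<lambda>k. (T (unit_tup g k) ! j) $$ (0,0)"] assms(3,4)
  show ?thesis using assms(2)
    by (simp add: tampl_def sum_set_upt_conv_sum_list_nat[symmetric] atLeast0LessThan)
qed

lemma tampl_carrier:
  assumes "X \<in> level g n" "j < g"
  shows "tampl g n T X ! j \<in> carrier_mat n n"
proof -
  have "\<forall>k\<in>set [0..<g]. k < g" by simp
  from foldr_entry[OF assms(1) this, of "\<lambda>k. (T (unit_tup g k) ! j) $$ (0,0)"]
  show ?thesis using assms(2) by (simp add: tampl_def)
qed



theorem lemma4p2:
  fixes g n :: nat
    and D :: "nat \<Rightarrow> complex mat list set"
    and f :: "nat \<Rightarrow> complex mat list \<Rightarrow> complex mat list"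
    and L L1 :: "complex mat list \<Rightarrow> complex mat list"
  assumes "nc_domain g D" and "contains_zero g D" and "nc_bounded g D"
    and "analytic_free_map g D f"
    and "f 1 (tzero g 1) = tzero g 1"
    and "n \<ge> 1"
    and "has_tderiv g n (D n) (f n) L (tzero g n)"
    and "has_tderiv g 1 (D 1) (f 1) L1 (tzero g 1)"
  shows "\<exists>W. unitary_op g n W \<and> (\<forall>X\<in>level g n. L (W X) = W (tampl g n L1 X))"
proof -
  have fm: "free_map g D f" using assms(4) by (simp add: analytic_free_map_def)
  have Dn: "D n \<subseteq> level g n" and D1: "D 1 \<subseteq> level g 1"
    and on: "topen g n (D n)" and o1: "topen g 1 (D 1)"
    using assms(1,6) by (auto simp: nc_domain_def nc_set_def)
  have zn: "tzero g n \<in> D n" and z1: "tzero g 1 \<in> D 1" using assms(2,6) by (auto simp: contains_zero_def)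
  have lin: "tlinear g n L" "tlinear g 1 L1" using assms(7,8) by (auto simp: has_tderiv_def)
  have rb: "\<forall>H h u j. H \<in> level g n \<longrightarrow> h \<in> level g 1 \<longrightarrow> u \<in> carrier_mat n 1 \<longrightarrow>
        (\<forall>j<g. H ! j * u = u * h ! j) \<longrightarrow> j < g \<longrightarrow> L H ! j * u = u * L1 h ! j"
    using rel_b[OF fm Dn D1 on o1 zn z1 assms(6) assms(7) assms(8)] by blast
  have main: "L X = tampl g n L1 X" if X: "X \<in> level g n" for X
  proof -
    define A where "A = (\<lambda>j k. L1 (unit_tup g k) ! j $$ (0,0))"
    have El: "L (Etup g n k a b) ! j $$ (i,c) = (if i = a \<and> c = b then A j k else 0)"
      if "k < g" "a < n" "b < n" "j < g" "i < n" "c < n" for k a b j i c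
      using L_elem[OF rb lin that] by (simp add: A_def)
    have fin: "finite ({..<g} \<times> {..<n} \<times> {..<n})" by simp
    from decomp[OF lin(1) El fin subset_refl, of X] Xs_full[OF X]
    have LXe: "\<forall>j<g. \<forall>i<n. \<forall>c<n. L X ! j $$ (i,c) = (\<Sum>k<g. A j k * X ! k $$ (i,c))"
      by (auto intro!: sum.cong)
    have LX: "L X \<in> level g n" using lin(1) X by (simp add: tlinear_def)
    show ?thesis
    proof (rule nth_equalityI)
      show "length (L X) = length (tampl g n L1 X)" using LX by (simp add: level_len tampl_def)
      fix j assume "j < length (L X)"
      hence j: "j < g" using LX by (simp add: level_len)
      show "L X ! j = tampl g n L1 X ! j"
      proof (rule eq_matI)
        fix i c assume "i < dim_row (tampl g n L1 X ! j)" "c < dim_col (tampl g n L1 X ! j)"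
        hence i: "i < n" and c: "c < n" using tampl_carrier[OF X j, of L1] by auto
        show "L X ! j $$ (i, c) = tampl g n L1 X ! j $$ (i, c)"
          using LXe j i c tampl_entry[OF X j i c] by (simp add: A_def)
      qed (use tampl_carrier[OF X j, of L1] level_nth[OF LX j] in auto)
    qed
  qed
  have "unitary_op g n id"
    by (auto simp: unitary_op_def tlinear_def)
  thus ?thesis using main by auto
qed


end
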